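(* Let $D_1,D_2\in B(\ell^2)$ be the diagonal operators $D_1(x_1,x_2,\ldots)=(2^{-1}x_1,2^{-2}x_2,\ldots)$ and $D_2(x_1,x_2,\ldots)=(2^{-2}x_1,2^{-4}x_2,\ldots)$ (i.e. diagonals $2^{-n}$ and $2^{-2n}$). Then $I_{D_1}=I_{D_2}$, but $D_1$ and $D_2$ are not equivalent after extension. In particular, for compact operators, generating the same operator ideal does not imply equivalence after extension.
   Context: $\ell^2=\ell^2(\mathbb N)$ over $\mathbb C$; $B(X,Y)$ denotes bounded linear operators. $X\oplus Y$ is the $\ell^2$-direct sum, $\mathrm{id}_X$ the identity. Operators $T\in B(X)$ and $S\in B(Y)$ are equivalent after extension if there exist Banach spaces $X'$, $Y'$ and invertible (boundedly) operators $E\in B(Y\oplus Y',X\oplus X')$ and $F\in B(X\oplus X',Y\oplus Y')$ with $\begin{bmatrix}T&0\\0&\mathrm{id}_{X'}\end{bmatrix}=E\begin{bmatrix}S&0\\0&\mathrm{id}_{Y'}\end{bmatrix}F$. For $T\in B(X,Y)$ and Banach spaces $Z_1,Z_2$, $I_T(Z_1,Z_2)=\bigcup_{n\in\mathbb N}\{\sum_{j=1}^n R_jTR_j' : R_j\in B(Y,Z_2),\ R_j'\in B(Z_1,X)\}$ and $I_T=\bigcup_{Z_1,Z_2}I_T(Z_1,Z_2)$; $I_T=I_S$ means equality of these sets for all $Z_1,Z_2$. *)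

theory Defs
  imports "HOL-Analysis.Analysis"
begin

text \<open>Complex Banach spaces are modelled as real Banach spaces (class banach)
  together with a complex structure J (multiplication by i).\<close>

definition cscale :: "('a::real_vector \<Rightarrow> 'a) \<Rightarrow> complex \<Rightarrow> 'a \<Rightarrow> 'a" where
  "cscale J c x = Re c *\<^sub>R x + Im c *\<^sub>R J x"

definition complex_structure :: "('a::real_normed_vector \<Rightarrow> 'a) \<Rightarrow> bool" where
  "complex_structure J \<longleftrightarrow> linear J \<and> (\<forall>x. J (J x) = - x)
     \<and> (\<forall>c x. norm (cscale J c x) = cmod c * norm x)"

definition cblin :: "('a::real_normed_vector \<Rightarrow> 'a) \<Rightarrow> ('b::real_normed_vector \<Rightarrow> 'b)
     \<Rightarrow> ('a \<Rightarrow> 'b) \<Rightarrow> bool" where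
  "cblin JX JY T \<longleftrightarrow> bounded_linear T \<and> (\<forall>x. T (JX x) = JY (T x))"

definition cinvertible :: "('a::real_normed_vector \<Rightarrow> 'a) \<Rightarrow> ('b::real_normed_vector \<Rightarrow> 'b)
     \<Rightarrow> ('a \<Rightarrow> 'b) \<Rightarrow> bool" where
  "cinvertible JX JY T \<longleftrightarrow> cblin JX JY T \<and>
     (\<exists>G. cblin JY JX G \<and> (\<forall>x. G (T x) = x) \<and> (\<forall>y. T (G y) = y))"

text \<open>Complex structure on the direct sum; the product norm of Isabelle is the l2-sum norm.\<close>
definition sumJ :: "('a \<Rightarrow> 'a) \<Rightarrow> ('b \<Rightarrow> 'b) \<Rightarrow> 'a \<times> 'b \<Rightarrow> 'a \<times> 'b" where
  "sumJ J1 J2 = map_prod J1 J2"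

definition ext_id :: "('a \<Rightarrow> 'b) \<Rightarrow> 'a \<times> 'c \<Rightarrow> 'b \<times> 'c" where
  "ext_id T p = (T (fst p), snd p)"

text \<open>T in B(X) and S in B(Y) are equivalent after extension via the given
  spaces X' and Y'.  Equivalence after extension is the existence of such X', Y'.\<close>
definition equiv_after_ext_via ::
  "('x::real_normed_vector \<Rightarrow> 'x) \<Rightarrow> ('y::real_normed_vector \<Rightarrow> 'y)
   \<Rightarrow> ('x1::real_normed_vector \<Rightarrow> 'x1) \<Rightarrow> ('y1::real_normed_vector \<Rightarrow> 'y1)
   \<Rightarrow> ('x \<Rightarrow> 'x) \<Rightarrow> ('y \<Rightarrow> 'y) \<Rightarrow> bool" where
  "equiv_after_ext_via JX JY JX' JY' T S \<longleftrightarrow>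
     (\<exists>(E :: 'y \<times> 'y1 \<Rightarrow> 'x \<times> 'x1) (F :: 'x \<times> 'x1 \<Rightarrow> 'y \<times> 'y1).
        cinvertible (sumJ JY JY') (sumJ JX JX') E \<and>
        cinvertible (sumJ JX JX') (sumJ JY JY') F \<and>
        (\<forall>p. ext_id T p = E (ext_id S (F p))))"

definition op_ideal ::
  "('x::real_normed_vector \<Rightarrow> 'x) \<Rightarrow> ('y::real_normed_vector \<Rightarrow> 'y)
   \<Rightarrow> ('z1::real_normed_vector \<Rightarrow> 'z1) \<Rightarrow> ('z2::real_normed_vector \<Rightarrow> 'z2)
   \<Rightarrow> ('x \<Rightarrow> 'y) \<Rightarrow> ('z1 \<Rightarrow> 'z2) set" where
  "op_ideal JX JY JZ1 JZ2 T =
     {(\<lambda>z. \<Sum>j<n. R j (T (R' j z))) | (n::nat) R R'.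
        \<forall>j<n. cblin JY JZ2 (R j) \<and> cblin JZ1 JX (R' j)}"

definition l2_seq :: "(nat \<Rightarrow> complex) set" where
  "l2_seq = {x. summable (\<lambda>n. (cmod (x n))\<^sup>2)}"

definition is_l2_model :: "('h::real_normed_vector \<Rightarrow> 'h) \<Rightarrow> ((nat \<Rightarrow> complex) \<Rightarrow> 'h) \<Rightarrow> bool" where
  "is_l2_model JH U \<longleftrightarrow> complex_structure JH \<and> bij_betw U l2_seq UNIV \<and>
     (\<forall>x\<in>l2_seq. \<forall>y\<in>l2_seq. U (\<lambda>n. x n + y n) = U x + U y) \<and>
     (\<forall>c. \<forall>x\<in>l2_seq. U (\<lambda>n. c * x n) = cscale JH c (U x)) \<and>
     (\<forall>x\<in>l2_seq. norm (U x) = sqrt (\<Sum>n. (cmod (x n))\<^sup>2))"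

text \<open>Diagonal operator with diagonal d (index n = 0,1,... corresponds to x_(n+1)).\<close>
definition diag_op :: "((nat \<Rightarrow> complex) \<Rightarrow> 'h) \<Rightarrow> (nat \<Rightarrow> complex) \<Rightarrow> 'h \<Rightarrow> 'h" where
  "diag_op U d h = U (\<lambda>n. d n * inv_into l2_seq U h n)"

end

theory Submission
  imports Defs
begin


lemma l2_sumsq_summable: "x \<in> l2_seq \<Longrightarrow> summable (\<lambda>n. (cmod (x n))\<^sup>2)"
  by (simp add: l2_seq_def)

lemma l2_dom:
  assumes "x \<in> l2_seq" "\<And>n. (cmod (y n))\<^sup>2 \<le> K * (cmod (x n))\<^sup>2"
  shows "y \<in> l2_seq" "(\<Sum>n. (cmod (y n))\<^sup>2) \<le> K * (\<Sum>n. (cmod (x n))\<^sup>2)"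
proof -
  have s: "summable (\<lambda>n. K * (cmod (x n))\<^sup>2)"
    using assms(1) by (intro summable_mult) (simp add: l2_seq_def)
  have sy: "summable (\<lambda>n. (cmod (y n))\<^sup>2)"
    by (rule summable_comparison_test'[OF s, of 0]) (simp add: assms(2))
  then show "y \<in> l2_seq" by (simp add: l2_seq_def)
  have "(\<Sum>n. (cmod (y n))\<^sup>2) \<le> (\<Sum>n. K * (cmod (x n))\<^sup>2)"
    by (rule suminf_le[OF assms(2) sy s])
  also have "\<dots> = K * (\<Sum>n. (cmod (x n))\<^sup>2)"
    using assms(1) by (intro suminf_mult) (simp add: l2_seq_def)
  finally show "(\<Sum>n. (cmod (y n))\<^sup>2) \<le> K * (\<Sum>n. (cmod (x n))\<^sup>2)" .
qed

lemma l2_add: assumes "x \<in> l2_seq" "y \<in> l2_seq" shows "(\<lambda>n. x n + y n) \<in> l2_seq"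
proof -
  have b: "norm ((cmod (x n + y n))\<^sup>2) \<le> 2 * (cmod (x n))\<^sup>2 + 2 * (cmod (y n))\<^sup>2" for n
  proof -
    have t: "cmod (x n + y n) \<le> cmod (x n) + cmod (y n)" by (rule norm_triangle_ineq)
    have "(cmod (x n + y n))\<^sup>2 \<le> (cmod (x n) + cmod (y n))\<^sup>2"
      by (rule power_mono[OF t norm_ge_zero])
    moreover have "0 \<le> (cmod (x n) - cmod (y n))\<^sup>2" by (rule zero_le_power2)
    ultimately have "(cmod (x n + y n))\<^sup>2 \<le> 2 * (cmod (x n))\<^sup>2 + 2 * (cmod (y n))\<^sup>2"
      unfolding power2_sum power2_diff by linarith
    then show ?thesis by simp
  qed
  have s: "summable (\<lambda>n. 2 * (cmod (x n))\<^sup>2 + 2 * (cmod (y n))\<^sup>2)"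
    by (intro summable_add summable_mult l2_sumsq_summable assms)
  have "summable (\<lambda>n. (cmod (x n + y n))\<^sup>2)"
    by (rule summable_comparison_test'[OF s, of 0]) (rule b)
  then show ?thesis by (simp add: l2_seq_def)
qed

lemma l2_scale: assumes "x \<in> l2_seq" shows "(\<lambda>n. c * x n) \<in> l2_seq"
  by (rule l2_dom(1)[OF assms, of _ "(cmod c)\<^sup>2"]) (simp add: norm_mult power_mult_distrib)

lemma l2_zero: "(\<lambda>n. 0) \<in> l2_seq"
  by (simp add: l2_seq_def)

lemma cscale_real: "cscale J (complex_of_real r) x = r *\<^sub>R x"
  by (simp add: cscale_def)

lemma cscale_ii: "cscale J \<i> x = J x"
  by (simp add: cscale_def)

locale l2m =
  fixes JH :: "'h::banach \<Rightarrow> 'h" and U :: "(nat \<Rightarrow> complex) \<Rightarrow> 'h"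
  assumes model: "is_l2_model JH U"
begin

definition co :: "'h \<Rightarrow> nat \<Rightarrow> complex" where "co h = inv_into l2_seq U h"

lemma bij: "bij_betw U l2_seq UNIV" using model by (simp add: is_l2_model_def)
lemma U_add: "x \<in> l2_seq \<Longrightarrow> y \<in> l2_seq \<Longrightarrow> U (\<lambda>n. x n + y n) = U x + U y"
  using model by (simp add: is_l2_model_def)
lemma U_scale: "x \<in> l2_seq \<Longrightarrow> U (\<lambda>n. c * x n) = cscale JH c (U x)"
  using model by (simp add: is_l2_model_def)
lemma U_norm: "x \<in> l2_seq \<Longrightarrow> norm (U x) = sqrt (\<Sum>n. (cmod (x n))\<^sup>2)"
  using model by (simp add: is_l2_model_def)
lemma cs: "complex_structure JH" using model by (simp add: is_l2_model_def)

lemma co_l2: "co h \<in> l2_seq"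
proof -
  have "U ` l2_seq = UNIV" using bij by (simp add: bij_betw_def)
  then show ?thesis unfolding co_def using inv_into_into[of h U l2_seq] by simp
qed
lemma U_co: "U (co h) = h"
  using bij unfolding co_def by (simp add: bij_betw_def f_inv_into_f)
lemma co_U: "x \<in> l2_seq \<Longrightarrow> co (U x) = x"
  using bij unfolding co_def by (simp add: bij_betw_def)
lemma U_inj: "x \<in> l2_seq \<Longrightarrow> y \<in> l2_seq \<Longrightarrow> U x = U y \<Longrightarrow> x = y"
  by (drule arg_cong[where f=co]) (simp add: co_U)

lemma U_real: "x \<in> l2_seq \<Longrightarrow> U (\<lambda>n. complex_of_real r * x n) = r *\<^sub>R U x"
  by (simp add: U_scale cscale_real)

lemma U_zero: "U (\<lambda>n. 0) = 0"
proof -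
  have "U (\<lambda>n. (0::complex) + 0) = U (\<lambda>n. 0) + U (\<lambda>n. 0)" by (rule U_add) (auto intro: l2_zero)
  then show ?thesis by simp
qed

lemma co_zero: "co 0 = (\<lambda>n. 0)"
  using co_U[OF l2_zero] U_zero by simp

lemma co_add: "co (a + b) = (\<lambda>n. co a n + co b n)"
proof -
  have e: "U (\<lambda>n. co a n + co b n) = a + b" using U_add[OF co_l2 co_l2] U_co by simp
  show ?thesis using co_U[OF l2_add[OF co_l2 co_l2], of a b] unfolding e .
qed

lemma co_cscale: "co (cscale JH c a) = (\<lambda>n. c * co a n)"
proof -
  have e: "U (\<lambda>n. c * co a n) = cscale JH c a" using U_scale[OF co_l2] U_co by simp
  show ?thesis using co_U[OF l2_scale[OF co_l2], of c a] unfolding e .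
qed

lemma co_scaleR: "co (r *\<^sub>R a) = (\<lambda>n. complex_of_real r * co a n)"
  using co_cscale[of "complex_of_real r" a] by (simp add: cscale_real)

lemma co_J: "co (JH a) = (\<lambda>n. \<i> * co a n)"
  using co_cscale[of "\<i>" a] by (simp add: cscale_ii)

lemma co_minus: "co (- a) = (\<lambda>n. - co a n)"
  using co_scaleR[of "-1" a] by simp

lemma co_diff: "co (a - b) = (\<lambda>n. co a n - co b n)"
  using co_add[of a "-b"] co_minus[of b] by simp

lemma norm_sq: "(norm h)\<^sup>2 = (\<Sum>n. (cmod (co h n))\<^sup>2)"
proof -
  have "norm h = sqrt (\<Sum>n. (cmod (co h n))\<^sup>2)" using U_norm[OF co_l2, of h] U_co by simp
  moreover have "(\<Sum>n. (cmod (co h n))\<^sup>2) \<ge> 0"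
    using co_l2[of h] by (intro suminf_nonneg) (auto simp: l2_seq_def)
  ultimately show ?thesis by simp
qed

definition seqop :: "((nat \<Rightarrow> complex) \<Rightarrow> (nat \<Rightarrow> complex)) \<Rightarrow> 'h \<Rightarrow> 'h" where
  "seqop M h = U (M (co h))"

lemma seqop_cblin:
  assumes l2: "\<And>x. x \<in> l2_seq \<Longrightarrow> M x \<in> l2_seq"
    and add: "\<And>x y. x \<in> l2_seq \<Longrightarrow> y \<in> l2_seq \<Longrightarrow> M (\<lambda>n. x n + y n) = (\<lambda>n. M x n + M y n)"
    and scl: "\<And>x c. x \<in> l2_seq \<Longrightarrow> M (\<lambda>n. c * x n) = (\<lambda>n. c * M x n)"
    and bnd: "\<And>x. x \<in> l2_seq \<Longrightarrow> (\<Sum>n. (cmod (M x n))\<^sup>2) \<le> K * (\<Sum>n. (cmod (x n))\<^sup>2)"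
    and K0: "K \<ge> 0"
  shows "cblin JH JH (seqop M)"
proof -
  define K' where "K' = K"
  have K': "K' \<ge> 0" "\<And>x. x \<in> l2_seq \<Longrightarrow> (\<Sum>n. (cmod (M x n))\<^sup>2) \<le> K' * (\<Sum>n. (cmod (x n))\<^sup>2)"
    using bnd K0 unfolding K'_def by auto
  have lin: "linear (seqop M)"
  proof (rule linearI)
    fix a b show "seqop M (a + b) = seqop M a + seqop M b"
      unfolding seqop_def co_add by (subst add[OF co_l2 co_l2]) (rule U_add[OF l2[OF co_l2] l2[OF co_l2]])
  next
    fix r a show "seqop M (r *\<^sub>R a) = r *\<^sub>R seqop M a"
      unfolding seqop_def co_scaleR by (subst scl[OF co_l2]) (rule U_real[OF l2[OF co_l2]])
  qed
  have "norm (seqop M h) \<le> norm h * sqrt K'" for h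
  proof -
    have "(norm (seqop M h))\<^sup>2 = (\<Sum>n. (cmod (M (co h) n))\<^sup>2)"
      unfolding seqop_def norm_sq co_U[OF l2[OF co_l2]] ..
    also have "\<dots> \<le> K' * (norm h)\<^sup>2" using K'(2)[OF co_l2, of h] unfolding norm_sq .
    also have "\<dots> = (norm h * sqrt K')\<^sup>2" using K'(1) by (simp add: power_mult_distrib)
    finally have "(norm (seqop M h))\<^sup>2 \<le> (norm h * sqrt K')\<^sup>2" .
    moreover have "0 \<le> norm h * sqrt K'" using K'(1) by simp
    ultimately show ?thesis by (rule power2_le_imp_le)
  qed
  then have "bounded_linear (seqop M)"
    by (intro bounded_linear.intro[OF lin] bounded_linear_axioms.intro exI[of _ "sqrt K'"]) blast
  moreover have "seqop M (JH x) = JH (seqop M x)" for x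
  proof -
    have "seqop M (JH x) = U (\<lambda>n. \<i> * M (co x) n)" unfolding seqop_def co_J scl[OF co_l2] ..
    also have "\<dots> = cscale JH \<i> (seqop M x)" unfolding seqop_def by (rule U_scale[OF l2[OF co_l2]])
    finally show ?thesis by (simp add: cscale_ii)
  qed
  ultimately show ?thesis by (simp add: cblin_def)
qed

lemma seqop_comp: "(\<And>x. x \<in> l2_seq \<Longrightarrow> N x \<in> l2_seq) \<Longrightarrow> seqop M (seqop N h) = seqop (\<lambda>x. M (N x)) h"
  unfolding seqop_def by (simp add: co_U co_l2)

lemma seqop_add: "(\<And>x. x \<in> l2_seq \<Longrightarrow> M x \<in> l2_seq) \<Longrightarrow> (\<And>x. x \<in> l2_seq \<Longrightarrow> N x \<in> l2_seq) \<Longrightarrow>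
   seqop M h + seqop N h = seqop (\<lambda>x n. M x n + N x n) h"
  unfolding seqop_def by (simp add: U_add co_l2)

lemma diag_seqop: "diag_op U d = seqop (\<lambda>x n. d n * x n)"
  unfolding diag_op_def seqop_def co_def by (rule ext) simp

end

lemma sum_lessThan_add_split: "(\<Sum>j<m+(n::nat). h j) = (\<Sum>j<m. h j) + (\<Sum>j<n. h (m + j))"
  by (induction n) (simp_all add: add.assoc)

lemma sum_pair_concat:
  "(\<Sum>j<(n::nat). f j + g j) = (\<Sum>j<n+n. if j < n then f j else g (j - n))"
proof -
  define H where "H j = (if j < n then f j else g (j - n))" for j
  have "(\<Sum>j<n+n. H j) = (\<Sum>j<n. H j) + (\<Sum>j<n. H (n + j))"
    by (rule sum_lessThan_add_split)
  also have "\<dots> = (\<Sum>j<n. f j) + (\<Sum>j<n. g j)"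
    unfolding H_def by (intro arg_cong2[where f="(+)"] sum.cong) auto
  finally show ?thesis unfolding H_def by (simp add: sum.distrib)
qed

lemma cblin_comp: "cblin JA JB f \<Longrightarrow> cblin JC JA g \<Longrightarrow> cblin JC JB (\<lambda>x. f (g x))"
  unfolding cblin_def using bounded_linear_compose[of f g] by (auto simp: o_def)

lemma cblin_zero: "linear (JB :: 'b::real_normed_vector \<Rightarrow> 'b) \<Longrightarrow> cblin JA JB (\<lambda>x::'a::real_normed_vector. 0)"
  unfolding cblin_def by (simp add: bounded_linear_zero linear_0)

lemma cblin_id: "cblin J J (\<lambda>x. x)"
  unfolding cblin_def by (simp add: bounded_linear_ident)

lemma op_ideal_mono2:
  assumes A1: "cblin JY JY A1" and A2: "cblin JY JY A2" and B1: "cblin JX JX B1" and B2: "cblin JX JX B2"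
    and T: "\<And>x. T x = A1 (S (B1 x)) + A2 (S (B2 x))"
  shows "op_ideal JX JY JZ1 JZ2 T \<subseteq> op_ideal JX JY JZ1 JZ2 S"
proof
  fix f assume "f \<in> op_ideal JX JY JZ1 JZ2 T"
  then obtain n :: nat and R R' where f: "f = (\<lambda>z. \<Sum>j<n. R j (T (R' j z)))"
    and RR: "\<forall>j<n. cblin JY JZ2 (R j) \<and> cblin JZ1 JX (R' j)"
    unfolding op_ideal_def mem_Collect_eq by auto
  define R2 where "R2 j = (if j < n then (\<lambda>y. R j (A1 y)) else (\<lambda>y. R (j - n) (A2 y)))" for j
  define R2' where "R2' j = (if j < n then (\<lambda>z. B1 (R' j z)) else (\<lambda>z. B2 (R' (j - n) z)))" for j
  have "f = (\<lambda>z. \<Sum>j<n+n. R2 j (S (R2' j z)))"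
  proof
    fix z
    have "f z = (\<Sum>j<n. R j (A1 (S (B1 (R' j z)))) + R j (A2 (S (B2 (R' j z)))))"
      unfolding f T using RR by (intro sum.cong refl) (simp add: cblin_def linear_add bounded_linear.linear)
    also have "\<dots> = (\<Sum>j<n+n. R2 j (S (R2' j z)))"
      unfolding sum_pair_concat R2_def R2'_def by (intro sum.cong refl) simp
    finally show "f z = (\<Sum>j<n+n. R2 j (S (R2' j z)))" .
  qed
  moreover have "\<forall>j<n+n. cblin JY JZ2 (R2 j) \<and> cblin JZ1 JX (R2' j)"
  proof (intro allI impI)
    fix j assume j: "j < n + n"
    show "cblin JY JZ2 (R2 j) \<and> cblin JZ1 JX (R2' j)"
    proof (cases "j < n")
      case True then have "cblin JY JZ2 (R j)" "cblin JZ1 JX (R' j)" using RR by auto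
      then show ?thesis unfolding R2_def R2'_def
        using True A1 B1 by (simp add: cblin_comp)
    next
      case False then have "j - n < n" using j by simp
      then have "cblin JY JZ2 (R (j-n))" "cblin JZ1 JX (R' (j-n))" using RR by auto
      then show ?thesis unfolding R2_def R2'_def
        using A2 B2 False by (simp add: cblin_comp)
    qed
  qed
  ultimately show "f \<in> op_ideal JX JY JZ1 JZ2 S" unfolding op_ideal_def mem_Collect_eq by blast
qed


lemma l2_sub:
  assumes g: "strict_mono g" and x: "x \<in> l2_seq"
  shows "(\<lambda>k. x (g k)) \<in> l2_seq" "(\<Sum>k. (cmod (x (g k)))\<^sup>2) \<le> (\<Sum>n. (cmod (x n))\<^sup>2)"
proof -
  define f where "f n = (if n \<in> range g then (cmod (x n))\<^sup>2 else 0)" for n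
  have zero: "\<And>n. n \<notin> range g \<Longrightarrow> f n = 0" by (simp add: f_def)
  have fg: "f (g k) = (cmod (x (g k)))\<^sup>2" for k by (simp add: f_def)
  have le: "f n \<le> (cmod (x n))\<^sup>2" for n by (simp add: f_def)
  have sx: "summable (\<lambda>n. (cmod (x n))\<^sup>2)" using x by (simp add: l2_seq_def)
  have sf: "summable f"
    by (rule summable_comparison_test'[OF sx, of 0]) (simp add: f_def)
  have "summable (\<lambda>k. f (g k))" using summable_mono_reindex[of g f, OF g zero] sf by simp
  then show "(\<lambda>k. x (g k)) \<in> l2_seq" by (simp add: fg l2_seq_def)
  have "(\<Sum>k. f (g k)) = suminf f" by (rule suminf_mono_reindex[of g f, OF g zero])
  also have "\<dots> \<le> (\<Sum>n. (cmod (x n))\<^sup>2)" by (rule suminf_le[OF le sf sx])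
  finally show "(\<Sum>k. (cmod (x (g k)))\<^sup>2) \<le> (\<Sum>n. (cmod (x n))\<^sup>2)" by (simp add: fg)
qed

lemma l2_pad:
  assumes g: "strict_mono g" and zero: "\<And>n. n \<notin> range g \<Longrightarrow> z n = 0"
    and zg: "(\<lambda>k. z (g k)) \<in> l2_seq"
  shows "z \<in> l2_seq" "(\<Sum>n. (cmod (z n))\<^sup>2) = (\<Sum>k. (cmod (z (g k)))\<^sup>2)"
proof -
  define f where "f n = (cmod (z n))\<^sup>2" for n
  have zf: "\<And>n. n \<notin> range g \<Longrightarrow> f n = 0" by (simp add: f_def zero)
  have "summable (\<lambda>k. f (g k))" using zg by (simp add: f_def l2_seq_def)
  then have "summable f" using summable_mono_reindex[of g f, OF g zf] by simp
  then show "z \<in> l2_seq" unfolding f_def[abs_def] l2_seq_def by simp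
  show "(\<Sum>n. (cmod (z n))\<^sup>2) = (\<Sum>k. (cmod (z (g k)))\<^sup>2)"
    using suminf_mono_reindex[of g f, OF g zf] unfolding f_def[abs_def] by simp
qed

definition sB1 :: "(nat \<Rightarrow> complex) \<Rightarrow> nat \<Rightarrow> complex" where "sB1 x = (\<lambda>k. x (2*k+1))"
definition sB2 :: "(nat \<Rightarrow> complex) \<Rightarrow> nat \<Rightarrow> complex" where "sB2 x = (\<lambda>k. x (2*k))"
definition sA1 :: "(nat \<Rightarrow> complex) \<Rightarrow> nat \<Rightarrow> complex" where "sA1 y = (\<lambda>n. if odd n then y (n div 2) else 0)"
definition sA2 :: "(nat \<Rightarrow> complex) \<Rightarrow> nat \<Rightarrow> complex" where "sA2 y = (\<lambda>n. if odd n then 0 else 2 * y (n div 2))"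

lemma sm_odd: "strict_mono (\<lambda>k::nat. 2*k+1)" by (rule strict_monoI) simp
lemma sm_even: "strict_mono (\<lambda>k::nat. 2*k)" by (rule strict_monoI) simp
lemma range_odd: "n \<notin> range (\<lambda>k::nat. 2*k+1) \<Longrightarrow> \<not> odd n"
  by (metis odd_two_times_div_two_succ rangeI)
lemma range_even: "n \<notin> range (\<lambda>k::nat. 2*k) \<Longrightarrow> odd n"
  by (metis even_two_times_div_two rangeI)

lemma sB1_l2: "x \<in> l2_seq \<Longrightarrow> sB1 x \<in> l2_seq"
  unfolding sB1_def using l2_sub(1)[OF sm_odd] .
lemma sB2_l2: "x \<in> l2_seq \<Longrightarrow> sB2 x \<in> l2_seq"
  unfolding sB2_def using l2_sub(1)[OF sm_even] .
lemma sB1_bnd: assumes "x \<in> l2_seq" shows "(\<Sum>n. (cmod (sB1 x n))\<^sup>2) \<le> 1 * (\<Sum>n. (cmod (x n))\<^sup>2)"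
  unfolding sB1_def using l2_sub(2)[OF sm_odd assms] by simp
lemma sB2_bnd: assumes "x \<in> l2_seq" shows "(\<Sum>n. (cmod (sB2 x n))\<^sup>2) \<le> 1 * (\<Sum>n. (cmod (x n))\<^sup>2)"
  unfolding sB2_def using l2_sub(2)[OF sm_even assms] by simp

lemma sA1_g: "(\<lambda>k. sA1 y (2*k+1)) = y" by (simp add: sA1_def)
lemma sA2_g: "(\<lambda>k. sA2 y (2*k)) = (\<lambda>k. 2 * y k)" by (simp add: sA2_def)
lemma sA1_zero: assumes "n \<notin> range (\<lambda>k::nat. 2*k+1)" shows "sA1 y n = 0"
  using range_odd[OF assms] by (simp add: sA1_def)
lemma sA2_zero: assumes "n \<notin> range (\<lambda>k::nat. 2*k)" shows "sA2 y n = 0"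
  using range_even[OF assms] by (simp add: sA2_def)

lemma sA1_l2: assumes y: "y \<in> l2_seq" shows "sA1 y \<in> l2_seq"
  apply (rule l2_pad(1)[OF sm_odd]) apply (erule sA1_zero) by (unfold sA1_g, rule y)
lemma sA1_bnd: assumes y: "y \<in> l2_seq" shows "(\<Sum>n. (cmod (sA1 y n))\<^sup>2) \<le> 1 * (\<Sum>n. (cmod (y n))\<^sup>2)"
proof -
  have "(\<Sum>n. (cmod (sA1 y n))\<^sup>2) = (\<Sum>k. (cmod (sA1 y (2*k+1)))\<^sup>2)"
    apply (rule l2_pad(2)[OF sm_odd]) apply (erule sA1_zero) by (unfold sA1_g, rule y)
  also have "\<dots> = (\<Sum>k. (cmod (y k))\<^sup>2)" by (simp add: sA1_def)
  finally show ?thesis by simp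
qed
lemma sA2_l2: assumes y: "y \<in> l2_seq" shows "sA2 y \<in> l2_seq"
  apply (rule l2_pad(1)[OF sm_even]) apply (erule sA2_zero) by (unfold sA2_g, rule l2_scale[OF y])
lemma sA2_bnd: assumes y: "y \<in> l2_seq" shows "(\<Sum>n. (cmod (sA2 y n))\<^sup>2) \<le> 4 * (\<Sum>n. (cmod (y n))\<^sup>2)"
proof -
  have "(\<Sum>n. (cmod (sA2 y n))\<^sup>2) = (\<Sum>k. (cmod (sA2 y (2*k)))\<^sup>2)"
    apply (rule l2_pad(2)[OF sm_even]) apply (erule sA2_zero) by (unfold sA2_g, rule l2_scale[OF y])
  also have "\<dots> = (\<Sum>k. (cmod (2 * y k))\<^sup>2)" by (simp add: sA2_def)
  also have "\<dots> \<le> 4 * (\<Sum>n. (cmod (y n))\<^sup>2)"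
    by (rule l2_dom(2)[OF y]) (simp add: norm_mult power_mult_distrib)
  finally show ?thesis .
qed

lemma diag_l2: "(\<And>n. cmod (d n) \<le> 1) \<Longrightarrow> x \<in> l2_seq \<Longrightarrow> (\<lambda>n. d n * x n) \<in> l2_seq"
  and diag_bnd: "(\<And>n. cmod (d n) \<le> 1) \<Longrightarrow> x \<in> l2_seq \<Longrightarrow>
     (\<Sum>n. (cmod (d n * x n))\<^sup>2) \<le> 1 * (\<Sum>n. (cmod (x n))\<^sup>2)"
proof -
  assume d: "\<And>n. cmod (d n) \<le> 1" and x: "x \<in> l2_seq"
  have p: "(cmod (d n * x n))\<^sup>2 \<le> 1 * (cmod (x n))\<^sup>2" for n
  proof -
    have "(cmod (d n))\<^sup>2 \<le> 1" using d[of n] by (simp add: power_le_one)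
    then have "(cmod (d n))\<^sup>2 * (cmod (x n))\<^sup>2 \<le> 1 * (cmod (x n))\<^sup>2"
      by (rule mult_right_mono) simp
    then show ?thesis by (simp add: norm_mult power_mult_distrib)
  qed
  show "(\<lambda>n. d n * x n) \<in> l2_seq" by (rule l2_dom(1)[OF x p])
  show "(\<Sum>n. (cmod (d n * x n))\<^sup>2) \<le> 1 * (\<Sum>n. (cmod (x n))\<^sup>2)" by (rule l2_dom(2)[OF x p])
qed

definition d1 :: "nat \<Rightarrow> complex" where "d1 n = (1/2) ^ (n+1)"
definition d2 :: "nat \<Rightarrow> complex" where "d2 n = (1/2) ^ (2*(n+1))"

lemma half_pow_le: "cmod ((1/2::complex)^k) \<le> 1"
proof -
  have "cmod ((1/2::complex)^k) = (1/2::real)^k" by (simp add: norm_power norm_divide)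
  also have "\<dots> \<le> 1" by (rule power_le_one) auto
  finally show ?thesis .
qed
lemma d1_le: "cmod (d1 n) \<le> 1" unfolding d1_def by (rule half_pow_le)
lemma d2_le: "cmod (d2 n) \<le> 1" unfolding d2_def by (rule half_pow_le)

lemma d1_sq: "d1 n * d1 n = d2 n"
  unfolding d1_def d2_def by (simp add: power_add[symmetric] mult_2)

lemma decomp_seq: "(\<lambda>n. d1 n * x n) =
   (\<lambda>n. sA1 (\<lambda>k. d2 k * sB1 x k) n + sA2 (\<lambda>k. d2 k * sB2 x k) n)"
proof
  fix n
  show "d1 n * x n = sA1 (\<lambda>k. d2 k * sB1 x k) n + sA2 (\<lambda>k. d2 k * sB2 x k) n"
  proof (cases "odd n")
    case True
    then obtain k where n: "n = 2*k+1" by (metis oddE)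
    show ?thesis unfolding n by (simp add: sA1_def sA2_def sB1_def d1_def d2_def)
  next
    case False
    then obtain k where n: "n = 2*k" by (metis evenE)
    have "(1/2::complex) ^ (2*k+1) = 2 * (1/2) ^ (2*(k+1))" by (simp add: field_simps)
    then show ?thesis unfolding n by (simp add: sA1_def sA2_def sB2_def d1_def d2_def)
  qed
qed

context l2m begin

lemma seqop_cblin1:
  assumes "\<And>x. x \<in> l2_seq \<Longrightarrow> M x \<in> l2_seq"
    and "\<And>x y. M (\<lambda>n. x n + y n) = (\<lambda>n. M x n + M y n)"
    and "\<And>x c. M (\<lambda>n. c * x n) = (\<lambda>n. c * M x n)"
    and "\<And>x. x \<in> l2_seq \<Longrightarrow> (\<Sum>n. (cmod (M x n))\<^sup>2) \<le> K * (\<Sum>n. (cmod (x n))\<^sup>2)"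
    and "K \<ge> 0"
  shows "cblin JH JH (seqop M)"
  by (rule seqop_cblin[OF assms(1,2,3,4,5)]) auto

lemma diag_cblin: assumes d: "\<And>n. cmod (d n) \<le> 1" shows "cblin JH JH (diag_op U d)"
  unfolding diag_seqop
  by (rule seqop_cblin1[where K=1, OF diag_l2[OF d] _ _ diag_bnd[OF d]]) (auto simp: fun_eq_iff algebra_simps)

lemma sA1_cblin: "cblin JH JH (seqop sA1)"
  by (rule seqop_cblin1[OF sA1_l2 _ _ sA1_bnd]) (auto simp: sA1_def fun_eq_iff)
lemma sA2_cblin: "cblin JH JH (seqop sA2)"
  by (rule seqop_cblin1[OF sA2_l2 _ _ sA2_bnd]) (auto simp: sA2_def fun_eq_iff algebra_simps)
lemma sB1_cblin: "cblin JH JH (seqop sB1)"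
  by (rule seqop_cblin1[OF sB1_l2 _ _ sB1_bnd]) (auto simp: sB1_def fun_eq_iff)
lemma sB2_cblin: "cblin JH JH (seqop sB2)"
  by (rule seqop_cblin1[OF sB2_l2 _ _ sB2_bnd]) (auto simp: sB2_def fun_eq_iff)

lemma D1_decomp: "diag_op U d1 h = seqop sA1 (diag_op U d2 (seqop sB1 h)) + seqop sA2 (diag_op U d2 (seqop sB2 h))"
proof -
  have "seqop sA1 (diag_op U d2 (seqop sB1 h)) = seqop (\<lambda>x. sA1 (\<lambda>k. d2 k * sB1 x k)) h"
    unfolding diag_seqop
    by (simp add: seqop_comp sB1_l2 diag_l2[OF d2_le])
  moreover have "seqop sA2 (diag_op U d2 (seqop sB2 h)) = seqop (\<lambda>x. sA2 (\<lambda>k. d2 k * sB2 x k)) h"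
    unfolding diag_seqop
    by (simp add: seqop_comp sB2_l2 diag_l2[OF d2_le])
  ultimately have "seqop sA1 (diag_op U d2 (seqop sB1 h)) + seqop sA2 (diag_op U d2 (seqop sB2 h)) =
     seqop (\<lambda>x n. sA1 (\<lambda>k. d2 k * sB1 x k) n + sA2 (\<lambda>k. d2 k * sB2 x k) n) h"
    by (simp add: seqop_add sA1_l2 sA2_l2 sB1_l2 sB2_l2 diag_l2[OF d2_le])
  also have "\<dots> = diag_op U d1 h" unfolding diag_seqop decomp_seq[symmetric] ..
  finally show ?thesis by simp
qed

lemma D2_decomp: "diag_op U d2 h = diag_op U d1 (diag_op U d1 h)"
  unfolding diag_seqop
  by (simp add: seqop_comp diag_l2[OF d1_le] mult.assoc[symmetric] d1_sq)

lemma part1: "op_ideal JH JH JZ1 JZ2 (diag_op U d1) = op_ideal JH JH JZ1 JZ2 (diag_op U d2)"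
proof (rule subset_antisym)
  show "op_ideal JH JH JZ1 JZ2 (diag_op U d1) \<subseteq> op_ideal JH JH JZ1 JZ2 (diag_op U d2)"
    by (rule op_ideal_mono2[OF sA1_cblin sA2_cblin sB1_cblin sB2_cblin D1_decomp])
  have lin: "linear (diag_op U d1)" using diag_cblin[OF d1_le] by (simp add: cblin_def bounded_linear.linear)
  have lJ: "linear JH" using cs by (simp add: complex_structure_def)
  show "op_ideal JH JH JZ1 JZ2 (diag_op U d2) \<subseteq> op_ideal JH JH JZ1 JZ2 (diag_op U d1)"
    by (rule op_ideal_mono2[OF cblin_id cblin_id diag_cblin[OF d1_le] cblin_zero[OF lJ]])
       (simp add: D2_decomp linear_0[OF lin])
qed

end




lemma cmod_d1_sq: "(cmod (d1 k))\<^sup>2 = (1/4::real)^(k+1)"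
proof -
  have c: "cmod (d1 k) = (1/2::real)^(k+1)" by (simp add: d1_def norm_power norm_divide)
  have "(cmod (d1 k))\<^sup>2 = (1/2::real)^(k+1) * (1/2)^(k+1)" by (simp only: c power2_eq_square)
  also have "\<dots> = ((1/2::real) * (1/2))^(k+1)" by (simp only: power_mult_distrib)
  finally show ?thesis by simp
qed

lemma cmod_d2_sq: "(cmod (d2 k))\<^sup>2 = (1/16::real)^(k+1)"
proof -
  have "cmod (d2 k) = (1/2::real)^(2*(k+1))" by (simp add: d2_def norm_power norm_divide)
  also have "\<dots> = ((1/2::real)^2)^(k+1)" by (simp only: power_mult)
  also have "\<dots> = ((1/2::real)*(1/2))^(k+1)" by (simp only: power2_eq_square)
  finally have c: "cmod (d2 k) = (1/4::real)^(k+1)" by simp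
  have "(cmod (d2 k))\<^sup>2 = (1/4::real)^(k+1) * (1/4)^(k+1)" by (simp only: c power2_eq_square)
  also have "\<dots> = ((1/4::real) * (1/4))^(k+1)" by (simp only: power_mult_distrib)
  finally show ?thesis by simp
qed

lemma key_arith:
  fixes P Q R St Sh X M K :: real
  assumes "P \<le> 2*Q + 2*St" "M*St \<le> R" "Sh \<le> Q" "R + X \<le> K*(Sh+St+X)" "2*K \<le> M" "K > 0"
    "St \<ge> 0" "X \<ge> 0"
  shows "P \<le> 4*(Q+X)"
proof -
  have "K*Sh \<le> K*Q" using assms(3,6) by (simp add: mult_left_mono)
  then have r: "R \<le> K*(Q+St+X)" using assms(4,8) by (simp add: algebra_simps)
  have "(2*K)*St \<le> M*St" using assms(5,7) by (rule mult_right_mono)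
  then have "2*K*St \<le> K*(Q+St+X)" using assms(2) r by linarith
  then have "K*St \<le> K*(Q+X)" by (simp add: algebra_simps)
  then have "St \<le> Q+X" using assms(6) by simp
  then have "P \<le> 4*Q + 4*X" using assms(1,8) by linarith
  then show ?thesis by (simp add: algebra_simps)
qed

lemma l2_summ_mult: "x \<in> l2_seq \<Longrightarrow> (\<And>k. cmod (c k) \<le> 1) \<Longrightarrow> summable (\<lambda>k. (cmod (c k * x k))\<^sup>2)"
  using diag_l2 by (simp add: l2_seq_def)

lemma pow4_le: assumes "n0 \<le> k" shows "4^(n0+1) * (1/4::real)^(k+1) \<le> 1"
proof -
  have "(4::real)^(n0+1) \<le> 4^(k+1)" using assms by (intro power_increasing) auto
  then show ?thesis by (simp add: power_one_over field_simps)
qed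

lemma key_seq:
  fixes a b :: "nat \<Rightarrow> complex" and X K :: real and n0 :: nat
  assumes a: "a \<in> l2_seq" and b: "b \<in> l2_seq" and a0: "\<And>k. k < n0 \<Longrightarrow> a k = 0"
    and hyp: "(\<Sum>k. (cmod (b k))\<^sup>2) + X \<le> K * ((\<Sum>k. (cmod (d1 k * b k))\<^sup>2) + X)"
    and K: "K > 0" "2*K \<le> 4^(n0+1)" and X: "X \<ge> 0"
  shows "(\<Sum>k. (cmod (d1 k * a k))\<^sup>2) \<le> 4 * ((\<Sum>k. (cmod (d1 k * (a k - b k)))\<^sup>2) + X)"
proof -
  define fP where "fP k = (cmod (d1 k * a k))\<^sup>2" for k
  define fQ where "fQ k = (cmod (d1 k * (a k - b k)))\<^sup>2" for k
  define fR where "fR k = (cmod (b k))\<^sup>2" for k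
  define fB where "fB k = (cmod (d1 k * b k))\<^sup>2" for k
  define fTt where "fTt k = (if k < n0 then 0 else fB k)" for k
  define fTh where "fTh k = (if k < n0 then fB k else 0)" for k
  have ab: "(\<lambda>k. a k - b k) \<in> l2_seq" using l2_add[OF a l2_scale[OF b, of "-1"]] by simp
  have sP: "summable fP" unfolding fP_def[abs_def] by (rule l2_summ_mult[OF a d1_le])
  have sQ: "summable fQ" unfolding fQ_def[abs_def] by (rule l2_summ_mult[OF ab d1_le])
  have sR: "summable fR" unfolding fR_def[abs_def] using b by (simp add: l2_seq_def)
  have sB: "summable fB" unfolding fB_def[abs_def] by (rule l2_summ_mult[OF b d1_le])
  have sTt: "summable fTt"
    by (rule summable_comparison_test'[OF sB, of 0]) (simp add: fTt_def fB_def)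
  have sTh: "summable fTh"
    by (rule summable_comparison_test'[OF sB, of 0]) (simp add: fTh_def fB_def)
  have p1: "fP k \<le> 2 * fQ k + 2 * fTt k" for k
  proof (cases "k < n0")
    case True then show ?thesis by (simp add: fP_def a0 fQ_def fTt_def)
  next
    case False
    have t: "cmod (d1 k * a k) \<le> cmod (d1 k * (a k - b k)) + cmod (d1 k * b k)"
      using norm_triangle_ineq[of "d1 k * (a k - b k)" "d1 k * b k"] by (simp add: algebra_simps)
    have "(cmod (d1 k * a k))\<^sup>2 \<le> (cmod (d1 k * (a k - b k)) + cmod (d1 k * b k))\<^sup>2"
      by (rule power_mono[OF t norm_ge_zero])
    moreover have "0 \<le> (cmod (d1 k * (a k - b k)) - cmod (d1 k * b k))\<^sup>2" by (rule zero_le_power2)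
    ultimately have "(cmod (d1 k * a k))\<^sup>2 \<le> 2 * (cmod (d1 k * (a k - b k)))\<^sup>2 + 2 * (cmod (d1 k * b k))\<^sup>2"
      unfolding power2_sum power2_diff by linarith
    then show ?thesis using False by (simp add: fP_def fQ_def fTt_def fB_def)
  qed
  have p2: "4^(n0+1) * fTt k \<le> fR k" for k
  proof (cases "k < n0")
    case True then show ?thesis by (simp add: fTt_def fR_def)
  next
    case False
    have "4^(n0+1) * fB k = (4^(n0+1) * (1/4::real)^(k+1)) * (cmod (b k))\<^sup>2"
      by (simp add: fB_def norm_mult power_mult_distrib cmod_d1_sq)
    also have "\<dots> \<le> 1 * (cmod (b k))\<^sup>2"
      by (rule mult_right_mono[OF pow4_le]) (use False in auto)
    finally show ?thesis using False by (simp add: fTt_def fR_def)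
  qed
  have p3: "fTh k \<le> fQ k" for k by (simp add: fTh_def fQ_def fB_def a0)
  have p4: "fB k = fTh k + fTt k" for k by (simp add: fTh_def fTt_def)
  define P where "P = suminf fP"
  define Q where "Q = suminf fQ"
  define R where "R = suminf fR"
  define St where "St = suminf fTt"
  define Sh where "Sh = suminf fTh"
  have e1: "P \<le> 2*Q + 2*St"
  proof -
    have "suminf fP \<le> (\<Sum>k. 2 * fQ k + 2 * fTt k)"
      by (rule suminf_le[OF p1 sP]) (intro summable_add summable_mult sQ sTt)
    also have "\<dots> = 2 * suminf fQ + 2 * suminf fTt"
      using sQ sTt by (simp add: suminf_add[symmetric] summable_mult suminf_mult)
    finally show ?thesis by (simp add: P_def Q_def St_def)
  qed
  have e2: "4^(n0+1) * St \<le> R"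
  proof -
    have "(\<Sum>k. 4^(n0+1) * fTt k) \<le> suminf fR"
      by (rule suminf_le[OF p2 _ sR]) (intro summable_mult sTt)
    then show ?thesis using sTt by (simp add: suminf_mult St_def R_def)
  qed
  have e3: "Sh \<le> Q" unfolding Sh_def Q_def by (rule suminf_le[OF p3 sTh sQ])
  have e4: "suminf fB = Sh + St" unfolding Sh_def St_def p4
    using sTh sTt by (simp add: suminf_add)
  have St0: "St \<ge> 0" unfolding St_def using sTt by (intro suminf_nonneg) (auto simp: fTt_def fB_def)
  have hyp': "R + X \<le> K*(Sh+St+X)" using hyp e4 by (simp add: R_def fR_def[abs_def] fB_def[abs_def])
  have "P \<le> 4*(Q+X)" by (rule key_arith[OF e1 e2 e3 hyp' K(2) K(1) St0 X])
  then show ?thesis by (simp add: P_def Q_def fP_def[abs_def] fQ_def[abs_def])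
qed

lemma lowerC:
  assumes a: "a \<in> l2_seq" and an: "\<And>k. n \<le> k \<Longrightarrow> a k = 0"
  shows "(1/4::real)^n * (\<Sum>k. (cmod (a k))\<^sup>2) \<le> (\<Sum>k. (cmod (d1 k * a k))\<^sup>2)"
proof -
  have p: "(1/4::real)^n * (cmod (a k))\<^sup>2 \<le> (cmod (d1 k * a k))\<^sup>2" for k
  proof (cases "n \<le> k")
    case True then show ?thesis by (simp add: an)
  next
    case False
    then have le: "(1/4::real)^n \<le> (1/4)^(k+1)" by (intro power_decreasing) auto
    have e: "(cmod (d1 k * a k))\<^sup>2 = (1/4::real)^(k+1) * (cmod (a k))\<^sup>2"
      by (simp only: norm_mult power_mult_distrib cmod_d1_sq)
    show ?thesis unfolding e by (rule mult_right_mono[OF le]) simp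
  qed
  have s1: "summable (\<lambda>k. (cmod (a k))\<^sup>2)" using a by (simp add: l2_seq_def)
  have "(1/4::real)^n * (\<Sum>k. (cmod (a k))\<^sup>2) = (\<Sum>k. (1/4::real)^n * (cmod (a k))\<^sup>2)"
    by (rule suminf_mult[OF s1, symmetric])
  also have "\<dots> \<le> (\<Sum>k. (cmod (d1 k * a k))\<^sup>2)"
    by (rule suminf_le[OF p summable_mult[OF s1] l2_summ_mult[OF a d1_le]])
  finally show ?thesis .
qed

lemma upperD:
  assumes g: "g \<in> l2_seq" and gm: "\<And>k. k < m \<Longrightarrow> g k = 0"
  shows "(\<Sum>k. (cmod (d2 k * g k))\<^sup>2) \<le> (1/16::real)^(m+1) * (\<Sum>k. (cmod (g k))\<^sup>2)"
proof -
  have p: "(cmod (d2 k * g k))\<^sup>2 \<le> (1/16::real)^(m+1) * (cmod (g k))\<^sup>2" for k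
  proof (cases "k < m")
    case True then show ?thesis by (simp add: gm)
  next
    case False
    then have le: "(1/16::real)^(k+1) \<le> (1/16)^(m+1)" by (intro power_decreasing) auto
    have e: "(cmod (d2 k * g k))\<^sup>2 = (1/16::real)^(k+1) * (cmod (g k))\<^sup>2"
      by (simp only: norm_mult power_mult_distrib cmod_d2_sq)
    show ?thesis unfolding e by (rule mult_right_mono[OF le]) simp
  qed
  have s1: "summable (\<lambda>k. (cmod (g k))\<^sup>2)" using g by (simp add: l2_seq_def)
  have "(\<Sum>k. (cmod (d2 k * g k))\<^sup>2) \<le> (\<Sum>k. (1/16::real)^(m+1) * (cmod (g k))\<^sup>2)"
    by (rule suminf_le[OF p l2_summ_mult[OF g d2_le] summable_mult[OF s1]])
  also have "\<dots> = (1/16::real)^(m+1) * (\<Sum>k. (cmod (g k))\<^sup>2)" by (rule suminf_mult[OF s1])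
  finally show ?thesis .
qed




definition dl :: "nat \<Rightarrow> nat \<Rightarrow> complex" where "dl k = (\<lambda>j. if j = k then 1 else 0)"
definition trunc :: "nat \<Rightarrow> (nat \<Rightarrow> complex) \<Rightarrow> nat \<Rightarrow> complex" where
  "trunc m z = (\<lambda>j. if j < m then z j else 0)"

lemma finsupp_l2: "(\<And>k. m \<le> k \<Longrightarrow> z k = 0) \<Longrightarrow> z \<in> l2_seq"
  unfolding l2_seq_def by (rule CollectI, rule summable_finite[of "{..<m}"]) auto

lemma dl_l2: "dl k \<in> l2_seq"
  by (rule finsupp_l2[of "Suc k"]) (simp add: dl_def)

lemma trunc_l2: "trunc m z \<in> l2_seq"
  by (rule finsupp_l2[of m]) (simp add: trunc_def)

context l2m begin

definition ev :: "nat \<Rightarrow> 'h" where "ev k = U (dl k)"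
definition Tset :: "nat \<Rightarrow> 'h set" where "Tset m = ev ` {..<m} \<union> (\<lambda>k. JH (ev k)) ` {..<m}"

lemma co_ev: "co (ev k) = dl k" unfolding ev_def by (rule co_U[OF dl_l2])
lemma co_Jev: "co (JH (ev k)) = (\<lambda>j. \<i> * dl k j)" by (simp add: co_J co_ev)

lemma finite_Tset: "finite (Tset m)" by (simp add: Tset_def)
lemma card_Tset: "card (Tset m) \<le> 2 * m"
proof -
  have "card (Tset m) \<le> card (ev ` {..<m}) + card ((\<lambda>k. JH (ev k)) ` {..<m})"
    unfolding Tset_def by (rule card_Un_le)
  also have "\<dots> \<le> m + m" by (intro add_mono card_image_le[THEN order.trans]) auto
  finally show ?thesis by simp
qed

lemma finsupp_span: "(\<And>k. m \<le> k \<Longrightarrow> z k = 0) \<Longrightarrow> U z \<in> span (Tset m)"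
proof (induction m arbitrary: z)
  case 0
  then have "z = (\<lambda>_. 0)" by auto
  then show ?case by (simp add: U_zero span_zero)
next
  case (Suc m)
  define z' where "z' = trunc m z"
  have z'0: "\<And>k. m \<le> k \<Longrightarrow> z' k = 0" by (simp add: z'_def trunc_def)
  have zz: "z = (\<lambda>j. z' j + z m * dl m j)"
    using Suc.prems by (auto simp: z'_def trunc_def dl_def fun_eq_iff not_less le_Suc_eq)
  have "U z = U z' + U (\<lambda>j. z m * dl m j)"
    by (subst zz, rule U_add[OF trunc_l2[of m z, folded z'_def] l2_scale[OF dl_l2]])
  also have "U (\<lambda>j. z m * dl m j) = cscale JH (z m) (ev m)" unfolding ev_def by (rule U_scale[OF dl_l2])
  also have "\<dots> = Re (z m) *\<^sub>R ev m + Im (z m) *\<^sub>R JH (ev m)" by (simp add: cscale_def)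
  finally have e: "U z = U z' + (Re (z m) *\<^sub>R ev m + Im (z m) *\<^sub>R JH (ev m))" .
  have sub: "span (Tset m) \<subseteq> span (Tset (Suc m))" by (rule span_mono) (auto simp: Tset_def)
  have "U z' \<in> span (Tset m)" using Suc.IH[of z'] z'0 by blast
  then have "U z' \<in> span (Tset (Suc m))" using sub by blast
  moreover have "ev m \<in> span (Tset (Suc m))" by (rule span_base) (simp add: Tset_def)
  moreover have "JH (ev m) \<in> span (Tset (Suc m))" by (rule span_base) (simp add: Tset_def)
  ultimately show ?case unfolding e by (intro span_add span_scale)
qed

lemma co_sum: "finite S \<Longrightarrow> co (\<Sum>v\<in>S. c v *\<^sub>R v) = (\<lambda>k. \<Sum>v\<in>S. complex_of_real (c v) * co v k)"
proof (induction S rule: finite_induct)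
  case empty then show ?case by (simp add: co_zero)
next
  case (insert x F) then show ?case by (simp add: co_add co_scaleR)
qed

definition Bset :: "nat \<Rightarrow> nat \<Rightarrow> 'h set" where
  "Bset n0 n = ev ` {n0..<n} \<union> (\<lambda>k. JH (ev k)) ` {n0..<n}"

lemma ev_inj: "ev j = ev k \<Longrightarrow> j = k"
proof -
  assume "ev j = ev k"
  then have "co (ev j) j = co (ev k) j" by simp
  then show "j = k" by (simp add: co_ev dl_def split: if_splits)
qed

lemma Jev_inj: "JH (ev j) = JH (ev k) \<Longrightarrow> j = k"
proof -
  assume "JH (ev j) = JH (ev k)"
  then have "co (JH (ev j)) j = co (JH (ev k)) j" by simp
  then show "j = k" by (simp add: co_Jev dl_def split: if_splits)
qed

lemma ev_Jev: "ev j \<noteq> JH (ev k)"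
proof
  assume "ev j = JH (ev k)"
  then have "Re (co (ev j) j) = Re (co (JH (ev k)) j)" by simp
  then show False by (simp add: co_Jev co_ev dl_def split: if_splits)
qed

lemma card_Bset: "card (Bset n0 n) = 2 * (n - n0)"
proof -
  have "card (Bset n0 n) = card (ev ` {n0..<n}) + card ((\<lambda>k. JH (ev k)) ` {n0..<n})"
    unfolding Bset_def by (rule card_Un_disjoint) (auto simp: ev_Jev)
  also have "card (ev ` {n0..<n}) = n - n0"
    by (subst card_image) (auto intro: inj_onI ev_inj)
  also have "card ((\<lambda>k. JH (ev k)) ` {n0..<n}) = n - n0"
    by (subst card_image) (auto intro: inj_onI Jev_inj)
  finally show ?thesis by simp
qed

lemma Re_co_B: "v \<in> Bset n0 n \<Longrightarrow> Re (co v k) = (if v = ev k then 1 else 0)"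
  by (auto simp: Bset_def co_ev co_Jev dl_def)

lemma Im_co_B: "v \<in> Bset n0 n \<Longrightarrow> Im (co v k) = (if v = JH (ev k) then 1 else 0)"
  by (auto simp: Bset_def co_ev co_Jev dl_def dest: Jev_inj)

lemma indep_Bset: "independent (Bset n0 n)"
proof -
  have fin: "finite (Bset n0 n)" by (simp add: Bset_def)
  have "\<forall>v\<in>Bset n0 n. c v = 0" if s: "(\<Sum>v\<in>Bset n0 n. c v *\<^sub>R v) = 0" for c
  proof
    fix w assume w: "w \<in> Bset n0 n"
    have z: "(\<Sum>v\<in>Bset n0 n. complex_of_real (c v) * co v k) = 0" for k
      using fun_cong[OF co_sum[OF fin, of c], of k] s by (simp add: co_zero)
    from w obtain k where "w = ev k \<or> w = JH (ev k)" unfolding Bset_def by auto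
    then show "c w = 0"
    proof
      assume wk: "w = ev k"
      have "0 = Re (\<Sum>v\<in>Bset n0 n. complex_of_real (c v) * co v k)" using z by simp
      also have "\<dots> = (\<Sum>v\<in>Bset n0 n. c v * Re (co v k))" by (simp add: Re_sum)
      also have "\<dots> = (\<Sum>v\<in>Bset n0 n. if v = ev k then c v else 0)"
        by (intro sum.cong refl) (simp add: Re_co_B)
      also have "\<dots> = c w" using fin w wk by simp
      finally show ?thesis by simp
    next
      assume wk: "w = JH (ev k)"
      have "0 = Im (\<Sum>v\<in>Bset n0 n. complex_of_real (c v) * co v k)" using z by simp
      also have "\<dots> = (\<Sum>v\<in>Bset n0 n. c v * Im (co v k))" by (simp add: Im_sum)
      also have "\<dots> = (\<Sum>v\<in>Bset n0 n. if v = JH (ev k) then c v else 0)"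
        by (intro sum.cong refl) (simp add: Im_co_B)
      also have "\<dots> = c w" using fin w wk by simp
      finally show ?thesis by simp
    qed
  qed
  then show ?thesis by (intro independent_if_scalars_zero[OF fin]) blast
qed

lemma span_Bset_supp: "h \<in> span (Bset n0 n) \<Longrightarrow> (k < n0 \<or> n \<le> k) \<Longrightarrow> co h k = 0"
proof -
  assume h: "h \<in> span (Bset n0 n)" and k: "k < n0 \<or> n \<le> k"
  have "subspace {h. \<forall>k. (k < n0 \<or> n \<le> k) \<longrightarrow> co h k = 0}"
    unfolding subspace_def by (auto simp: co_zero co_add co_scaleR)
  moreover have "\<forall>k. (k < n0 \<or> n \<le> k) \<longrightarrow> co v k = 0" if "v \<in> Bset n0 n" for v
    using that by (auto simp: Bset_def co_ev co_Jev dl_def)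
  ultimately have "\<forall>k. (k < n0 \<or> n \<le> k) \<longrightarrow> co h k = 0"
    using span_induct[OF h, of "\<lambda>h. \<forall>k. (k < n0 \<or> n \<le> k) \<longrightarrow> co h k = 0"] by blast
  then show ?thesis using k by blast
qed

lemma exists_kernel:
  assumes lin: "linear \<Psi>" and sp: "\<And>h. \<Psi> h \<in> span (Tset m)" and mn: "m < n - n0"
  shows "\<exists>h \<in> span (Bset n0 n). h \<noteq> 0 \<and> \<Psi> h = 0"
proof (rule ccontr)
  assume "\<not> ?thesis"
  then have nz: "\<And>h. h \<in> span (Bset n0 n) \<Longrightarrow> \<Psi> h = 0 \<Longrightarrow> h = 0" by blast
  have inj: "inj_on \<Psi> (span (Bset n0 n))"
  proof (rule inj_onI)
    fix x y assume x: "x \<in> span (Bset n0 n)" and y: "y \<in> span (Bset n0 n)" and e: "\<Psi> x = \<Psi> y"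
    have "\<Psi> (x - y) = 0" using e by (simp add: linear_diff[OF lin])
    then have "x - y = 0" by (rule nz[OF span_diff[OF x y]])
    then show "x = y" by simp
  qed
  have ind: "independent (\<Psi> ` Bset n0 n)" by (rule linear_independent_injective_image[OF lin indep_Bset inj])
  have "\<Psi> ` Bset n0 n \<subseteq> span (Tset m)" using sp by blast
  then have "card (\<Psi> ` Bset n0 n) \<le> card (Tset m)"
    using independent_span_bound[OF finite_Tset ind] by blast
  also have "\<dots> \<le> 2 * m" by (rule card_Tset)
  also have "card (\<Psi> ` Bset n0 n) = card (Bset n0 n)"
    by (rule card_image, rule inj_on_subset[OF inj span_superset])
  finally show False using mn by (simp add: card_Bset)
qed

end




lemma final_arith:
  fixes A :: real
  assumes h: "(1/4::real)^n \<le> A * (1/16)^(n-n0)" and n0: "n0 \<le> n" and K: "A * 16^n0 < 4^n"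
  shows False
proof -
  have e1: "(1/4::real)^n * 4^n = 1" by (simp add: power_mult_distrib[symmetric])
  have e2: "(1/16::real)^(n-n0) * 16^(n-n0) = 1" by (simp add: power_mult_distrib[symmetric])
  have e3: "(16::real)^(n-n0) * 16^n0 = 4^n * 4^n"
  proof -
    have "(16::real)^(n-n0) * 16^n0 = 16^n" using n0 by (simp add: power_add[symmetric])
    also have "\<dots> = (4*4)^n" by simp
    finally show ?thesis by (simp only: power_mult_distrib)
  qed
  have P: "(0::real) \<le> 4^n * 16^(n-n0)" by simp
  have "(1/4::real)^n * (4^n * 16^(n-n0)) \<le> A * (1/16)^(n-n0) * (4^n * 16^(n-n0))"
    by (rule mult_right_mono[OF h P])
  also have "(1/4::real)^n * (4^n * 16^(n-n0)) = 16^(n-n0)" using e1 by (simp add: mult.assoc[symmetric])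
  also have "A * (1/16)^(n-n0) * (4^n * 16^(n-n0)) = A * 4^n * ((1/16)^(n-n0) * 16^(n-n0))"
    by (simp only: mult_ac)
  also have "\<dots> = A * 4^n" using e2 by simp
  finally have "(16::real)^(n-n0) \<le> A * 4^n" .
  then have "(16::real)^(n-n0) * 16^n0 \<le> A * 4^n * 16^n0" by (rule mult_right_mono) simp
  then have "(4::real)^n * 4^n \<le> (A * 16^n0) * 4^n" unfolding e3 by (simp only: mult_ac)
  moreover have "(A * 16^n0) * 4^n < (4::real)^n * 4^n" by (rule mult_strict_right_mono[OF K]) simp
  ultimately show False by simp
qed

context l2m begin

lemma norm_diag_sq: "(\<And>k. cmod (d k) \<le> 1) \<Longrightarrow> (norm (diag_op U d h))\<^sup>2 = (\<Sum>k. (cmod (d k * co h k))\<^sup>2)"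
proof -
  assume d: "\<And>k. cmod (d k) \<le> 1"
  have "diag_op U d h = U (\<lambda>k. d k * co h k)" unfolding diag_op_def co_def ..
  then show ?thesis using norm_sq[of "diag_op U d h"] co_U[OF diag_l2[OF d co_l2]] by simp
qed

lemma trunc_cblin: "cblin JH JH (seqop (trunc m))"
proof (rule seqop_cblin1[where K=1])
  fix x :: "nat \<Rightarrow> complex" assume x: "x \<in> l2_seq"
  show "trunc m x \<in> l2_seq" by (rule trunc_l2)
  show "(\<Sum>n. (cmod (trunc m x n))\<^sup>2) \<le> 1 * (\<Sum>n. (cmod (x n))\<^sup>2)"
    by (rule l2_dom(2)[OF x]) (simp add: trunc_def)
qed (auto simp: trunc_def fun_eq_iff)

lemma part2:
  fixes JX' :: "'x::banach \<Rightarrow> 'x" and JY' :: "'y::banach \<Rightarrow> 'y"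
  shows "\<not> equiv_after_ext_via JH JH JX' JY' (diag_op U d1) (diag_op U d2)"
proof
  define T where "T = diag_op U d1"
  define S where "S = diag_op U d2"
  assume "equiv_after_ext_via JH JH JX' JY' (diag_op U d1) (diag_op U d2)"
  then obtain E :: "'h \<times> 'y \<Rightarrow> 'h \<times> 'x" and F :: "'h \<times> 'x \<Rightarrow> 'h \<times> 'y" where
      cE: "cinvertible (sumJ JH JY') (sumJ JH JX') E" and cF: "cinvertible (sumJ JH JX') (sumJ JH JY') F"
      and eq: "\<And>p. ext_id T p = E (ext_id S (F p))"
    unfolding equiv_after_ext_via_def T_def S_def by blast
  from cE obtain Ei where bE: "bounded_linear E" and bEi: "bounded_linear Ei" and EiE: "\<And>z. Ei (E z) = z"
    unfolding cinvertible_def cblin_def by blast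
  from cF obtain G where bF: "bounded_linear F" and bG: "bounded_linear G" and FG: "\<And>z. F (G z) = z"
    unfolding cinvertible_def cblin_def by blast
  obtain cE where cE0: "cE > 0" and nE: "\<And>z. norm (E z) \<le> norm z * cE"
    using bounded_linear.pos_bounded[OF bE] by blast
  obtain cEi where cEi0: "cEi > 0" and nEi: "\<And>z. norm (Ei z) \<le> norm z * cEi"
    using bounded_linear.pos_bounded[OF bEi] by blast
  obtain cF where cF0: "cF > 0" and nF: "\<And>z. norm (F z) \<le> norm z * cF"
    using bounded_linear.pos_bounded[OF bF] by blast
  obtain cG where cG0: "cG > 0" and nG: "\<And>z. norm (G z) \<le> norm z * cG"
    using bounded_linear.pos_bounded[OF bG] by blast
  have linT: "linear T" unfolding T_def using diag_cblin[OF d1_le] by (simp add: cblin_def bounded_linear.linear)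
  have linS: "linear S" unfolding S_def using diag_cblin[OF d2_le] by (simp add: cblin_def bounded_linear.linear)
  have linE: "linear E" using bE by (rule bounded_linear.linear)
  define C2 where "C2 = (cG * cEi)\<^sup>2"
  have C20: "C2 > 0" unfolding C2_def using cG0 cEi0 by simp
  obtain n0 where n0: "2 * C2 < 4 ^ n0" using real_arch_pow[of "4::real" "2*C2"] by auto
  have n0': "2 * C2 \<le> 4 ^ (n0+1)"
  proof -
    have "(4::real)^n0 \<le> 4^(n0+1)" by (rule power_increasing) auto
    then show ?thesis using n0 by linarith
  qed
  define A where "A = 4 * cE\<^sup>2 * cF\<^sup>2"
  obtain n1 where n1: "A * 16^n0 < 4 ^ n1" using real_arch_pow[of "4::real" "A * 16^n0"] by auto
  define n where "n = n1 + n0 + 1"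
  have nK: "A * 16^n0 < 4 ^ n"
  proof -
    have "(4::real)^n1 \<le> 4^n" unfolding n_def by (rule power_increasing) auto
    then show ?thesis using n1 by linarith
  qed
  define m where "m = n - n0 - 1"
  have mn: "m < n - n0" and m1: "m + 1 = n - n0" and n0n: "n0 \<le> n" unfolding m_def n_def by auto
  define \<Psi> where "\<Psi> h = seqop (trunc m) (fst (F (h, 0)))" for h
  have bl1: "bounded_linear (\<lambda>h::'h. (h, 0::'x))"
    by (intro bounded_linear_Pair bounded_linear_ident bounded_linear_zero)
  have bl2: "bounded_linear (\<lambda>h. fst (F (h, 0::'x)))"
    using bounded_linear_compose[OF bounded_linear_fst bounded_linear_compose[OF bF bl1]] by (simp add: o_def)
  have "bounded_linear \<Psi>"
    unfolding \<Psi>_def using bounded_linear_compose[OF trunc_cblin[unfolded cblin_def, THEN conjunct1] bl2]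
    by (simp add: o_def)
  then have lin\<Psi>: "linear \<Psi>" by (rule bounded_linear.linear)
  have sp: "\<Psi> h \<in> span (Tset m)" for h
    unfolding \<Psi>_def seqop_def by (rule finsupp_span) (simp add: trunc_def)
  obtain h where hB: "h \<in> span (Bset n0 n)" and h0: "h \<noteq> 0" and \<Psi>h: "\<Psi> h = 0"
    using exists_kernel[OF lin\<Psi> sp mn] by blast
  define g where "g = fst (F (h, 0))"
  define y where "y = snd (F (h, 0))"
  have Fh: "F (h, 0) = (g, y)" by (simp add: g_def y_def)
  have g0: "co g k = 0" if "k < m" for k
  proof -
    have "U (trunc m (co g)) = U (\<lambda>_. 0)" using \<Psi>h unfolding \<Psi>_def seqop_def g_def by (simp add: U_zero)
    then have "trunc m (co g) = (\<lambda>_. 0)" by (rule U_inj[OF trunc_l2 l2_zero])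
    then have "trunc m (co g) k = 0" by simp
    then show ?thesis using that by (simp add: trunc_def)
  qed
  have hsupp: "co h k = 0" if "k < n0 \<or> n \<le> k" for k using span_Bset_supp[OF hB that] .
  define w where "w = G (0, y)"
  define h' where "h' = fst w"
  define x where "x = snd w"
  have wp: "w = (h', x)" by (simp add: h'_def x_def)
  have Fw: "F w = (0, y)" unfolding w_def by (rule FG)
  have ea: "(T h', x) = E (0, y)"
  proof -
    have "ext_id T w = E (ext_id S (F w))" by (rule eq)
    then show ?thesis unfolding Fw by (simp add: ext_id_def wp linear_0[OF linS])
  qed
  have eb: "(T h, 0) = E (S g, y)"
  proof -
    have "ext_id T (h, 0) = E (ext_id S (F (h, 0)))" by (rule eq)
    then show ?thesis unfolding Fh by (simp add: ext_id_def)
  qed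
  have ec: "E (S g, y) = E (S g, 0) + E (0, y)"
    using linear_add[OF linE, of "(S g, 0)" "(0, y)"] by simp
  have r: "E (S g, 0) = (T (h - h'), - x)"
  proof -
    have "E (S g, 0) = E (S g, y) - E (0, y)" using ec by simp
    also have "\<dots> = (T h, 0) - (T h', x)" using eb ea by simp
    also have "\<dots> = (T h - T h', - x)" by simp
    finally show ?thesis by (simp add: linear_diff[OF linT])
  qed
  have ny: "norm y \<le> norm (T h', x) * cEi"
  proof -
    have "norm y = norm (Ei (E (0, y)))" by (simp add: EiE norm_Pair)
    also have "\<dots> \<le> norm (E (0, y)) * cEi" by (rule nEi)
    finally show ?thesis unfolding ea[symmetric] .
  qed
  have nw: "norm w \<le> cG * cEi * norm (T h', x)"
  proof -
    have "norm w \<le> norm (0::'h, y) * cG" unfolding w_def by (rule nG)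
    also have "\<dots> = norm y * cG" by (simp add: norm_Pair)
    also have "\<dots> \<le> norm (T h', x) * cEi * cG" by (rule mult_right_mono[OF ny]) (use cG0 in simp)
    finally show ?thesis by (simp add: mult_ac)
  qed
  have nw2: "(norm h')\<^sup>2 + (norm x)\<^sup>2 \<le> C2 * ((norm (T h'))\<^sup>2 + (norm x)\<^sup>2)"
  proof -
    have "(norm w)\<^sup>2 \<le> (cG * cEi * norm (T h', x))\<^sup>2" by (rule power_mono[OF nw norm_ge_zero])
    then show ?thesis by (simp add: wp norm_Pair C2_def power_mult_distrib)
  qed
  define a where "a = co h"
  define b where "b = co h'"
  have nTh: "(norm (T h))\<^sup>2 = (\<Sum>k. (cmod (d1 k * a k))\<^sup>2)" unfolding T_def a_def by (rule norm_diag_sq[OF d1_le])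
  have nTh': "(norm (T h'))\<^sup>2 = (\<Sum>k. (cmod (d1 k * b k))\<^sup>2)" unfolding T_def b_def by (rule norm_diag_sq[OF d1_le])
  have nTd: "(norm (T (h - h')))\<^sup>2 = (\<Sum>k. (cmod (d1 k * (a k - b k)))\<^sup>2)"
    unfolding T_def a_def b_def using norm_diag_sq[OF d1_le, where h="h - h'"] by (simp add: co_diff)
  have nh': "(norm h')\<^sup>2 = (\<Sum>k. (cmod (b k))\<^sup>2)" unfolding b_def by (rule norm_sq)
  have key: "(norm (T h))\<^sup>2 \<le> 4 * ((norm (T (h - h')))\<^sup>2 + (norm x)\<^sup>2)"
    unfolding nTh nTd
    by (rule key_seq[of a b n0 "(norm x)\<^sup>2" C2]) (use co_l2 hsupp nw2 nh' nTh' C20 n0' in \<open>auto simp: a_def b_def\<close>)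
  have nr: "(norm (T (h - h')))\<^sup>2 + (norm x)\<^sup>2 \<le> cE\<^sup>2 * (norm (S g))\<^sup>2"
  proof -
    have "norm (E (S g, 0)) \<le> norm (S g, 0::'y) * cE" by (rule nE)
    also have "\<dots> = norm (S g) * cE" by (simp add: norm_Pair)
    finally have "norm (T (h - h'), - x) \<le> norm (S g) * cE" unfolding r .
    then have "(norm (T (h - h'), - x))\<^sup>2 \<le> (norm (S g) * cE)\<^sup>2" by (rule power_mono) simp
    then show ?thesis by (simp add: norm_Pair power_mult_distrib mult_ac)
  qed
  have lowh: "(1/4::real)^n * (norm h)\<^sup>2 \<le> (norm (T h))\<^sup>2"
    unfolding nTh norm_sq[of h] a_def by (rule lowerC[OF co_l2]) (simp add: hsupp)
  have upg: "(norm (S g))\<^sup>2 \<le> (1/16::real)^(m+1) * (norm g)\<^sup>2"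
    unfolding S_def norm_diag_sq[OF d2_le] norm_sq[of g] by (rule upperD[OF co_l2 g0])
  have ng: "(norm g)\<^sup>2 \<le> cF\<^sup>2 * (norm h)\<^sup>2"
  proof -
    have "norm g \<le> norm (F (h, 0))" unfolding Fh by (rule norm_fst_le)
    also have "\<dots> \<le> norm (h, 0::'x) * cF" by (rule nF)
    also have "\<dots> = norm h * cF" by (simp add: norm_Pair)
    finally have "(norm g)\<^sup>2 \<le> (norm h * cF)\<^sup>2" by (rule power_mono) simp
    then show ?thesis by (simp add: power_mult_distrib mult_ac)
  qed
  have "4 * ((norm (T (h - h')))\<^sup>2 + (norm x)\<^sup>2) \<le> 4 * (cE\<^sup>2 * (norm (S g))\<^sup>2)"
    by (rule mult_left_mono[OF nr]) simp
  then have "(1/4::real)^n * (norm h)\<^sup>2 \<le> 4 * (cE\<^sup>2 * (norm (S g))\<^sup>2)"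
    using order.trans[OF lowh key] by (rule order.trans[rotated])
  also have "\<dots> \<le> 4 * (cE\<^sup>2 * ((1/16::real)^(m+1) * (norm g)\<^sup>2))"
    by (intro mult_left_mono upg) auto
  also have "\<dots> \<le> 4 * (cE\<^sup>2 * ((1/16::real)^(m+1) * (cF\<^sup>2 * (norm h)\<^sup>2)))"
    by (intro mult_left_mono ng) auto
  also have "\<dots> = (A * (1/16)^(n-n0)) * (norm h)\<^sup>2" unfolding A_def m1 by (simp only: mult_ac)
  finally have "(1/4::real)^n * (norm h)\<^sup>2 \<le> (A * (1/16)^(n-n0)) * (norm h)\<^sup>2" .
  moreover have "(norm h)\<^sup>2 > 0" using h0 by simp
  ultimately have "(1/4::real)^n \<le> A * (1/16)^(n-n0)" by simp
  then show False by (rule final_arith[OF _ n0n nK])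
qed

end


theorem mainTheorem5:
  fixes JH :: "'h::banach \<Rightarrow> 'h" and U :: "(nat \<Rightarrow> complex) \<Rightarrow> 'h"
    and JZ1 :: "'z1::banach \<Rightarrow> 'z1" and JZ2 :: "'z2::banach \<Rightarrow> 'z2"
    and JX' :: "'x::banach \<Rightarrow> 'x" and JY' :: "'y::banach \<Rightarrow> 'y"
  assumes "is_l2_model JH U"
    and "complex_structure JZ1" and "complex_structure JZ2"
    and "complex_structure JX'" and "complex_structure JY'"
  shows "op_ideal JH JH JZ1 JZ2 (diag_op U (\<lambda>n. (1/2) ^ (n+1)))
           = op_ideal JH JH JZ1 JZ2 (diag_op U (\<lambda>n. (1/2) ^ (2*(n+1))))
         \<and> \<not> equiv_after_ext_via JH JH JX' JY'
               (diag_op U (\<lambda>n. (1/2) ^ (n+1))) (diag_op U (\<lambda>n. (1/2) ^ (2*(n+1))))"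
proof -
  interpret l2m JH U by unfold_locales (rule assms(1))
  have e1: "(\<lambda>n. (1/2) ^ (n+1)) = d1" by (simp add: d1_def fun_eq_iff)
  have e2: "(\<lambda>n. (1/2) ^ (2*(n+1))) = d2" by (simp add: d2_def fun_eq_iff)
  show ?thesis unfolding e1 e2 using part1 part2 by blast
qed

end
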